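(* Let $G_{ij}$ ($0\le i\le m$, $0\le j\le n$) be an $m\times n$ net in the plane $\mathbb R^2$, let $0\le i_0\le m$, $0\le j_0\le n$, and let points $F_{ij_0}\in I^3$ ($0\le i\le m$) and $F_{i_0j}\in I^3$ ($0\le j\le n$) be given with top views $\overline{F_{ij_0}}=G_{ij_0}$ and $\overline{F_{i_0j}}=G_{i_0j}$. Then there exists a unique $m\times n$ net $F_{ij}$ ($0\le i\le m$, $0\le j\le n$) in $I^3$ having these two parameter lines and top view $\overline{F_{ij}}=G_{ij}$ for all $i,j$.
   Context: $I^3$ is $\mathbb{R}^3$ with coordinates $(x,y,z)$; the top view of $(x,y,z)$ is $(x,y)$. An $m\times n$ net (in $\mathbb R^3$ or $\mathbb R^2$) is a collection of points $F_{ij}$, $0\le i\le m,0\le j\le n$, such that $F_{ij},F_{i+1,j},F_{i+1,j+1},F_{i,j+1}$ are consecutive vertices of a convex planar quadrilateral for all $0\le i<m,0\le j<n$. Its parameter lines are the broken lines $F_{i0}\dots F_{in}$ and $F_{0j}\dots F_{mj}$; the data above are the parameter lines $F_{0j_0}\dots F_{mj_0}$ and $F_{i_00}\dots F_{i_0n}$. *)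

theory Defs
  imports "HOL-Analysis.Analysis"
begin

text \<open>Points of isotropic space I^3 = R^3 with coordinates (x,y,z); the plane R^2.\<close>
type_synonym point3 = "real \<times> real \<times> real"
type_synonym point2 = "real \<times> real"

definition top_view :: "point3 \<Rightarrow> point2" where
  "top_view p = (fst p, fst (snd p))"

definition convex_quad :: "'a::euclidean_space \<Rightarrow> 'a \<Rightarrow> 'a \<Rightarrow> 'a \<Rightarrow> bool" where
  "convex_quad a b c d \<longleftrightarrow>
     coplanar {a, b, c, d} \<and> \<not> collinear {a, b, c, d} \<and>
     open_segment a c \<inter> open_segment b d \<noteq> {}"

definition is_net :: "nat \<Rightarrow> nat \<Rightarrow> (nat \<Rightarrow> nat \<Rightarrow> 'a::euclidean_space) \<Rightarrow> bool" where
  "is_net m n F \<longleftrightarrow>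
     (\<forall>i<m. \<forall>j<n. convex_quad (F i j) (F (Suc i) j) (F (Suc i) (Suc j)) (F i (Suc j)))"

end

theory Submission
  imports Defs
begin


lemma top_linear: "linear top_view"
  by (rule linearI) (auto simp: top_view_def)

lemma top_bl: "bounded_linear top_view"
  using top_linear linear_conv_bounded_linear by blast

lemma top_hull: "top_view ` (affine hull S) = affine hull (top_view ` S)"
  by (rule affine_hull_linear_image[OF top_bl])

lemma collinear_top: "collinear S \<Longrightarrow> collinear (top_view ` S)"
proof -
  assume "collinear S"
  then obtain u v where "S \<subseteq> affine hull {u,v}" by (auto simp: collinear_affine_hull)
  then have "top_view ` S \<subseteq> top_view ` (affine hull {u,v})"
    by (rule image_mono)
  then have "top_view ` S \<subseteq> affine hull {top_view u, top_view v}"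
    by (simp add: top_hull)
  then show ?thesis unfolding collinear_affine_hull by (rule exI[of _ "top_view u", OF exI[of _ "top_view v"]])
qed

lemma L_uniq:
  fixes x y z :: "'a::real_vector"
  assumes "\<not> collinear {x,y,z}" "s *\<^sub>R (y - x) + t *\<^sub>R (z - x) = 0"
  shows "s = 0 \<and> t = 0"
proof (cases "s = 0")
  case False
  have "y = (1 + t/s) *\<^sub>R x + (- t/s) *\<^sub>R z"
  proof -
    have "s *\<^sub>R y = s *\<^sub>R x - t *\<^sub>R (z - x)" using assms(2) by (simp add: algebra_simps)
    then have "inverse s *\<^sub>R (s *\<^sub>R y) = inverse s *\<^sub>R (s *\<^sub>R x - t *\<^sub>R (z - x))" by simp
    then have "y = x - (t/s) *\<^sub>R (z - x)" using False
      by (simp add: scaleR_diff_right divide_inverse mult.commute)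
    then show ?thesis by (simp add: algebra_simps)
  qed
  then have "y = (1 + t/s) *\<^sub>R x + (- t/s) *\<^sub>R z \<and> (1 + t/s) + (- t/s) = 1" by simp
  then have "y \<in> {u *\<^sub>R x + v *\<^sub>R z |u v. u + v = 1}" by blast
  then have "y \<in> affine hull {x,z}" by (simp only: affine_hull_2)
  then have "collinear {x,z,y}" by (rule affine_hull_3_imp_collinear)
  then show ?thesis using assms(1) by (simp add: insert_commute)
next
  case True
  show ?thesis
  proof (rule ccontr)
    assume "\<not> (s = 0 \<and> t = 0)"
    then have "t \<noteq> 0" using True by auto
    then have "z = x" using assms(2) True by simp
    then show False using assms(1) by (simp add: insert_commute)
  qed
qed

lemma hull_full:
  fixes a b c :: point2
  assumes "\<not> collinear {a,b,c}"
  shows "affine hull {a,b,c} = UNIV"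
proof -
  have "aff_dim {a,b,c} > 1" using assms by (simp add: collinear_aff_dim)
  moreover have "aff_dim {a,b,c} \<le> int DIM(point2)" by (rule aff_dim_le_DIM)
  ultimately have "aff_dim {a,b,c} = int DIM(point2)" by simp
  then show ?thesis using aff_dim_eq_full by blast
qed

lemma lift_exists:
  assumes "\<not> collinear (top_view ` {X,Y,Z})"
  shows "\<exists>P \<in> affine hull {X,Y,Z}. top_view P = q"
proof -
  have "top_view ` (affine hull {X,Y,Z}) = UNIV"
    using hull_full[of "top_view X" "top_view Y" "top_view Z"] assms top_hull by simp
  then have "q \<in> top_view ` (affine hull {X,Y,Z})" by simp
  then obtain P where "P \<in> affine hull {X,Y,Z}" "q = top_view P" by (rule imageE)
  then show ?thesis by blast
qed

lemma lift_unique: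
  assumes nc: "\<not> collinear (top_view ` {X,Y,Z})"
    and P: "P \<in> affine hull {X,Y,Z}" and P': "P' \<in> affine hull {X,Y,Z}"
    and eq: "top_view P = top_view P'"
  shows "P = P'"
proof -
  obtain u v w where 1: "P = u *\<^sub>R X + v *\<^sub>R Y + w *\<^sub>R Z" "u + v + w = 1"
    using P by (auto simp: affine_hull_3)
  obtain u' v' w' where 2: "P' = u' *\<^sub>R X + v' *\<^sub>R Y + w' *\<^sub>R Z" "u' + v' + w' = 1"
    using P' by (auto simp: affine_hull_3)
  have diff: "P - P' = (v - v') *\<^sub>R (Y - X) + (w - w') *\<^sub>R (Z - X)"
  proof -
    have h: "u - u' = - (v - v') - (w - w')" using 1 2 by simp
    have "P - P' = (u - u') *\<^sub>R X + (v - v') *\<^sub>R Y + (w - w') *\<^sub>R Z"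
      unfolding 1 2 by (simp add: algebra_simps)
    also have "\<dots> = (- (v - v') - (w - w')) *\<^sub>R X + (v - v') *\<^sub>R Y + (w - w') *\<^sub>R Z"
      using h by simp
    also have "\<dots> = (v - v') *\<^sub>R (Y - X) + (w - w') *\<^sub>R (Z - X)"
      by (simp add: algebra_simps)
    finally show ?thesis .
  qed
  have "top_view (P - P') = 0" using eq linear_diff[OF top_linear] by simp
  then have "(v - v') *\<^sub>R (top_view Y - top_view X) + (w - w') *\<^sub>R (top_view Z - top_view X) = 0"
    unfolding diff by (simp add: linear_add[OF top_linear] linear_scale[OF top_linear] linear_diff[OF top_linear])
  moreover have nc': "\<not> collinear {top_view X, top_view Y, top_view Z}" using nc by simp
  ultimately have "v - v' = 0 \<and> w - w' = 0" using L_uniq[OF nc'] by blast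
  then show ?thesis using diff by simp
qed

definition lift :: "point3 set \<Rightarrow> point2 \<Rightarrow> point3" where
  "lift S q = (SOME P. P \<in> affine hull S \<and> top_view P = q)"

lemma lift_props:
  assumes "\<not> collinear (top_view ` {X,Y,Z})"
  shows "lift {X,Y,Z} q \<in> affine hull {X,Y,Z} \<and> top_view (lift {X,Y,Z} q) = q"
  unfolding lift_def using lift_exists[OF assms] by (rule someI2_bex) auto

lemma lift_eq:
  assumes "\<not> collinear (top_view ` {X,Y,Z})" "P \<in> affine hull {X,Y,Z}" "top_view P = q"
  shows "P = lift {X,Y,Z} q"
proof -
  note l = lift_props[OF assms(1), of q]
  show ?thesis
    by (rule lift_unique[OF assms(1) assms(2) conjunct1[OF l]]) (simp add: assms(3) l)
qed

lemma coplanar_hull: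
  fixes X Y Z W :: "'a::euclidean_space"
  assumes "\<not> collinear {X,Y,Z}" "coplanar {X,Y,Z,W}"
  shows "W \<in> affine hull {X,Y,Z}"
proof -
  obtain u v w where s: "{X,Y,Z,W} \<subseteq> affine hull {u,v,w}" using assms(2) by (auto simp: coplanar_def)
  have "aff_dim {X,Y,Z} > 1" using assms(1) by (simp add: collinear_aff_dim)
  moreover have "aff_dim {u,v,w} \<le> 2"
  proof -
    have "card {u,v,w} \<le> 3" by (auto simp: card_insert_if)
    then show ?thesis using aff_dim_le_card[of "{u,v,w}"] by simp
  qed
  moreover have h: "affine hull {X,Y,Z} \<subseteq> affine hull {u,v,w}"
    using s by (meson affine_affine_hull hull_minimal insert_subset)
  moreover have "\<not> (affine hull {X,Y,Z} \<subset> affine hull {u,v,w})"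
  proof
    assume "affine hull {X,Y,Z} \<subset> affine hull {u,v,w}"
    then have "aff_dim {X,Y,Z} < aff_dim {u,v,w}" by (rule aff_dim_psubset)
    with calculation show False by simp
  qed
  ultimately have "affine hull {X,Y,Z} = affine hull {u,v,w}" by blast
  then show ?thesis using s by auto
qed



lemma diag_col:
  fixes p q r s x :: "'a::euclidean_space"
  assumes xpq: "x \<in> open_segment p q" and xrs: "x \<in> open_segment r s" and col: "collinear {p,q,r}"
  shows "collinear {p,q,r,s}"
proof -
  obtain u where u: "p \<noteq> q" "0 < u" "u < 1" "x = (1 - u) *\<^sub>R p + u *\<^sub>R q"
    using xpq by (auto simp: in_segment)
  obtain v where v: "r \<noteq> s" "0 < v" "v < 1" "x = (1 - v) *\<^sub>R r + v *\<^sub>R s"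
    using xrs by (auto simp: in_segment)
  have A: "affine (affine hull {p,q})" by (rule affine_affine_hull)
  have rh: "r \<in> affine hull {p,q}" using collinear_3_imp_in_affine_hull[OF col u(1)] .
  have xh: "x \<in> affine hull {p,q}"
  proof -
    have "x = (1 - u) *\<^sub>R p + u *\<^sub>R q \<and> (1 - u) + u = 1" using u(4) by simp
    then have "x \<in> {a *\<^sub>R p + b *\<^sub>R q |a b. a + b = 1}" by blast
    then show ?thesis by (simp only: affine_hull_2)
  qed
  have seq: "s = (1/v) *\<^sub>R x + (1 - 1/v) *\<^sub>R r"
  proof -
    have "(1/v) *\<^sub>R x + (1 - 1/v) *\<^sub>R r = ((1/v) * (1 - v) + (1 - 1/v)) *\<^sub>R r + ((1/v) * v) *\<^sub>R s"
      unfolding v(4) by (simp only: scaleR_add_right scaleR_scaleR scaleR_add_left) (simp add: add_ac)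
    also have "\<dots> = s"
    proof -
      have c1: "(1/v) * (1 - v) + (1 - 1/v) = 0" and c2: "(1/v) * v = 1" using v(2) by (simp_all add: field_simps)
      show ?thesis by (simp only: c1 c2) simp
    qed
    finally show ?thesis by simp
  qed
  have sh: "s \<in> affine hull {p,q}"
    unfolding seq by (rule mem_affine[OF A xh rh]) simp
  have "{p,q,r,s} \<subseteq> affine hull {p,q}"
    using rh sh by (simp add: hull_inc)
  then show ?thesis unfolding collinear_affine_hull by (rule exI[of _ p, OF exI[of _ q]])
qed

lemma cq_nc:
  fixes a b c d :: "'a::euclidean_space"
  assumes "convex_quad a b c d"
  shows "\<not> collinear {a,b,d} \<and> \<not> collinear {a,b,c} \<and> \<not> collinear {a,c,d} \<and> \<not> collinear {b,c,d}"
proof -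
  have nc: "\<not> collinear {a,b,c,d}" using assms by (simp add: convex_quad_def)
  obtain x where x1: "x \<in> open_segment a c" and x2: "x \<in> open_segment b d"
    using assms by (auto simp: convex_quad_def)
  have x1': "x \<in> open_segment c a" and x2': "x \<in> open_segment d b"
    using x1 x2 open_segment_commute by auto
  have 1: "\<not> collinear {a,c,b}"
  proof
    assume "collinear {a,c,b}"
    then have "collinear {a,c,b,d}" by (rule diag_col[OF x1 x2])
    then show False using nc by (simp add: insert_commute)
  qed
  have 2: "\<not> collinear {a,c,d}"
  proof
    assume "collinear {a,c,d}"
    then have "collinear {a,c,d,b}" by (rule diag_col[OF x1 x2'])
    then show False using nc by (simp add: insert_commute)
  qed
  have 3: "\<not> collinear {b,d,a}"
  proof
    assume "collinear {b,d,a}"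
    then have "collinear {b,d,a,c}" by (rule diag_col[OF x2 x1])
    then show False using nc by (simp add: insert_commute)
  qed
  have 4: "\<not> collinear {b,d,c}"
  proof
    assume "collinear {b,d,c}"
    then have "collinear {b,d,c,a}" by (rule diag_col[OF x2 x1'])
    then show False using nc by (simp add: insert_commute)
  qed
  show ?thesis using 1 2 3 4 by (simp add: insert_commute)
qed

lemma cq_rot:
  "convex_quad a b c d \<Longrightarrow> convex_quad b c d a"
  unfolding convex_quad_def by (auto simp: insert_commute open_segment_commute)

lemma cq_refl:
  "convex_quad a b c d \<Longrightarrow> convex_quad a d c b"
  unfolding convex_quad_def by (auto simp: insert_commute open_segment_commute)

lemma QL:
  fixes P1 P2 P3 P4 :: point3
  assumes g: "convex_quad (top_view P1) (top_view P2) (top_view P3) (top_view P4)"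
  shows "convex_quad P1 P2 P3 P4 \<longleftrightarrow> P3 = lift {P1,P2,P4} (top_view P3)"
proof -
  have ncg: "\<not> collinear (top_view ` {P1,P2,P4})" using cq_nc[OF g] by simp
  then have ncP: "\<not> collinear {P1,P2,P4}" using collinear_top by blast
  show ?thesis
  proof
    assume "convex_quad P1 P2 P3 P4"
    then have "coplanar {P1,P2,P4,P3}" by (simp add: convex_quad_def insert_commute)
    then have "P3 \<in> affine hull {P1,P2,P4}" by (rule coplanar_hull[OF ncP])
    then show "P3 = lift {P1,P2,P4} (top_view P3)" by (rule lift_eq[OF ncg]) simp
  next
    assume e: "P3 = lift {P1,P2,P4} (top_view P3)"
    let ?H = "affine hull {P1,P2,P4}"
    have A: "affine ?H" by (rule affine_affine_hull)
    have h3: "P3 \<in> ?H" using lift_props[OF ncg, of "top_view P3"] e by simp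
    have h1: "P1 \<in> ?H" and h2: "P2 \<in> ?H" and h4: "P4 \<in> ?H" by (simp_all add: hull_inc)
    have cop: "coplanar {P1,P2,P3,P4}"
      unfolding coplanar_def using h1 h2 h3 h4 by (intro exI[of _ P1, OF exI[of _ P2, OF exI[of _ P4]]]) simp
    have ncol: "\<not> collinear {P1,P2,P3,P4}"
    proof
      assume "collinear {P1,P2,P3,P4}"
      then have "collinear (top_view ` {P1,P2,P3,P4})" by (rule collinear_top)
      then show False using g by (simp add: convex_quad_def)
    qed
    obtain x where x1: "x \<in> open_segment (top_view P1) (top_view P3)"
      and x2: "x \<in> open_segment (top_view P2) (top_view P4)"
      using g by (auto simp: convex_quad_def)
    obtain u where u: "top_view P1 \<noteq> top_view P3" "0 < u" "u < 1"
       "x = (1 - u) *\<^sub>R top_view P1 + u *\<^sub>R top_view P3"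
      using x1 by (auto simp: in_segment)
    obtain v where v: "top_view P2 \<noteq> top_view P4" "0 < v" "v < 1"
       "x = (1 - v) *\<^sub>R top_view P2 + v *\<^sub>R top_view P4"
      using x2 by (auto simp: in_segment)
    define X1 where "X1 = (1 - u) *\<^sub>R P1 + u *\<^sub>R P3"
    define X2 where "X2 = (1 - v) *\<^sub>R P2 + v *\<^sub>R P4"
    have X1h: "X1 \<in> ?H" unfolding X1_def by (rule mem_affine[OF A h1 h3]) simp
    have X2h: "X2 \<in> ?H" unfolding X2_def by (rule mem_affine[OF A h2 h4]) simp
    have t1: "top_view X1 = x" unfolding X1_def u(4)
      by (simp add: linear_add[OF top_linear] linear_scale[OF top_linear])
    have t2: "top_view X2 = x" unfolding X2_def v(4)
      by (simp add: linear_add[OF top_linear] linear_scale[OF top_linear])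
    have "X1 = X2" using lift_unique[OF ncg X1h X2h] t1 t2 by simp
    moreover have "X1 \<in> open_segment P1 P3"
      unfolding in_segment X1_def using u by auto
    moreover have "X2 \<in> open_segment P2 P4"
      unfolding in_segment X2_def using v by auto
    ultimately have "open_segment P1 P3 \<inter> open_segment P2 P4 \<noteq> {}" by auto
    then show "convex_quad P1 P2 P3 P4" using cop ncol by (simp add: convex_quad_def)
  qed
qed



definition far :: "nat \<Rightarrow> nat \<Rightarrow> nat" where
  "far i0 i = (if i < i0 then i else Suc i)"
definition pv :: "nat \<Rightarrow> nat \<Rightarrow> nat" where
  "pv i0 I = (if i0 < I then I - 1 else Suc I)"
definition dd :: "nat \<Rightarrow> nat \<Rightarrow> nat" where
  "dd a b = (if a < b then b - a else a - b)"

lemma far_lt: "i < i0 \<Longrightarrow> far i0 i = i \<and> pv i0 i = Suc i"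
  by (simp add: far_def pv_def)
lemma far_ge: "\<not> i < i0 \<Longrightarrow> far i0 i = Suc i \<and> pv i0 (Suc i) = i"
  by (simp add: far_def pv_def)

lemma far_range: "i < m \<Longrightarrow> i0 \<le> m \<Longrightarrow> far i0 i \<le> m \<and> far i0 i \<noteq> i0 \<and> pv i0 (far i0 i) \<le> m"
  by (auto simp: far_def pv_def)

lemma far_surj: "I \<le> m \<Longrightarrow> I \<noteq> i0 \<Longrightarrow> i0 \<le> m \<Longrightarrow> \<exists>i<m. far i0 i = I"
proof -
  assume a: "I \<le> m" "I \<noteq> i0" "i0 \<le> m"
  show ?thesis
  proof (cases "I < i0")
    case True then show ?thesis using a by (intro exI[of _ I]) (simp add: far_def)
  next
    case False then show ?thesis using a by (intro exI[of _ "I - 1"]) (auto simp: far_def)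
  qed
qed

lemma pv_range: "I \<le> m \<Longrightarrow> I \<noteq> i0 \<Longrightarrow> i0 \<le> m \<Longrightarrow> pv i0 I \<le> m \<and> dd i0 (pv i0 I) < dd i0 I"
  by (auto simp: pv_def dd_def)

lemma cq_norm:
  fixes H :: "nat \<Rightarrow> nat \<Rightarrow> 'a::euclidean_space"
  shows "convex_quad (H i j) (H (Suc i) j) (H (Suc i) (Suc j)) (H i (Suc j)) \<longleftrightarrow>
    convex_quad (H (pv i0 (far i0 i)) (pv j0 (far j0 j))) (H (far i0 i) (pv j0 (far j0 j)))
                (H (far i0 i) (far j0 j)) (H (pv i0 (far i0 i)) (far j0 j))"
proof (cases "i < i0")
  case True
  note hi = far_lt[OF True]
  show ?thesis
  proof (cases "j < j0")
    case True
    note hj = far_lt[OF True]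
    show ?thesis using hi hj
      by (simp add: convex_quad_def insert_commute open_segment_commute Int_commute)
  next
    case False
    note hj = far_ge[OF False]
    show ?thesis using hi hj
      by (simp add: convex_quad_def insert_commute open_segment_commute Int_commute)
  qed
next
  case False
  note hi = far_ge[OF False]
  show ?thesis
  proof (cases "j < j0")
    case True
    note hj = far_lt[OF True]
    show ?thesis using hi hj
      by (simp add: convex_quad_def insert_commute open_segment_commute Int_commute)
  next
    case False
    note hj = far_ge[OF False]
    show ?thesis using hi hj
      by (simp add: convex_quad_def insert_commute open_segment_commute Int_commute)
  qed
qed

definition rec_eq :: "nat \<Rightarrow> nat \<Rightarrow> nat \<Rightarrow> nat \<Rightarrow> (nat \<Rightarrow> nat \<Rightarrow> point2) \<Rightarrow> (nat \<Rightarrow> nat \<Rightarrow> point3) \<Rightarrow> bool" where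
  "rec_eq m n i0 j0 G F \<longleftrightarrow> (\<forall>I\<le>m. \<forall>J\<le>n. I \<noteq> i0 \<longrightarrow> J \<noteq> j0 \<longrightarrow>
     F I J = lift {F (pv i0 I) (pv j0 J), F I (pv j0 J), F (pv i0 I) J} (G I J))"

lemma quad_iff:
  fixes F :: "nat \<Rightarrow> nat \<Rightarrow> point3"
  assumes G: "is_net m n G" and r: "i0 \<le> m" "j0 \<le> n"
    and tops: "\<forall>i\<le>m. \<forall>j\<le>n. top_view (F i j) = G i j"
    and ij: "i < m" "j < n"
  shows "convex_quad (F i j) (F (Suc i) j) (F (Suc i) (Suc j)) (F i (Suc j)) \<longleftrightarrow>
    F (far i0 i) (far j0 j) = lift {F (pv i0 (far i0 i)) (pv j0 (far j0 j)), F (far i0 i) (pv j0 (far j0 j)),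
        F (pv i0 (far i0 i)) (far j0 j)} (G (far i0 i) (far j0 j))"
proof -
  let ?I = "far i0 i" and ?J = "far j0 j"
  let ?I' = "pv i0 ?I" and ?J' = "pv j0 ?J"
  have ri: "?I \<le> m" "?I' \<le> m" using far_range[OF ij(1) r(1)] by auto
  have rj: "?J \<le> n" "?J' \<le> n" using far_range[OF ij(2) r(2)] by auto
  have gq: "convex_quad (G i j) (G (Suc i) j) (G (Suc i) (Suc j)) (G i (Suc j))"
    using G ij by (simp add: is_net_def)
  then have gq': "convex_quad (G ?I' ?J') (G ?I ?J') (G ?I ?J) (G ?I' ?J)"
    by (simp add: cq_norm[of G i j i0 j0])
  have t: "top_view (F ?I' ?J') = G ?I' ?J'" "top_view (F ?I ?J') = G ?I ?J'"
      "top_view (F ?I ?J) = G ?I ?J" "top_view (F ?I' ?J) = G ?I' ?J"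
    using tops ri rj by auto
  have "convex_quad (F i j) (F (Suc i) j) (F (Suc i) (Suc j)) (F i (Suc j)) \<longleftrightarrow>
     convex_quad (F ?I' ?J') (F ?I ?J') (F ?I ?J) (F ?I' ?J)"
    by (rule cq_norm)
  also have "\<dots> \<longleftrightarrow> F ?I ?J = lift {F ?I' ?J', F ?I ?J', F ?I' ?J} (top_view (F ?I ?J))"
    by (rule QL) (simp only: t gq')
  finally show ?thesis using t(3) by simp
qed

lemma net_iff_rec:
  fixes F :: "nat \<Rightarrow> nat \<Rightarrow> point3"
  assumes G: "is_net m n G" and r: "i0 \<le> m" "j0 \<le> n"
    and tops: "\<forall>i\<le>m. \<forall>j\<le>n. top_view (F i j) = G i j"
  shows "is_net m n F \<longleftrightarrow> rec_eq m n i0 j0 G F"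
proof
  assume net: "is_net m n F"
  show "rec_eq m n i0 j0 G F"
    unfolding rec_eq_def
  proof (intro allI impI)
    fix I J assume IJ: "I \<le> m" "J \<le> n" "I \<noteq> i0" "J \<noteq> j0"
    obtain i where i: "i < m" "far i0 i = I" using far_surj IJ r by blast
    obtain j where j: "j < n" "far j0 j = J" using far_surj IJ r by blast
    have "convex_quad (F i j) (F (Suc i) j) (F (Suc i) (Suc j)) (F i (Suc j))"
      using net i j by (simp add: is_net_def)
    then show "F I J = lift {F (pv i0 I) (pv j0 J), F I (pv j0 J), F (pv i0 I) J} (G I J)"
      using quad_iff[OF G r tops i(1) j(1)] i j by simp
  qed
next
  assume re: "rec_eq m n i0 j0 G F"
  show "is_net m n F"
    unfolding is_net_def
  proof (intro allI impI)
    fix i j assume ij: "i < m" "j < n"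
    have "far i0 i \<le> m" "far i0 i \<noteq> i0" "far j0 j \<le> n" "far j0 j \<noteq> j0"
      using far_range ij r by auto
    then show "convex_quad (F i j) (F (Suc i) j) (F (Suc i) (Suc j)) (F i (Suc j))"
      using quad_iff[OF G r tops ij] re unfolding rec_eq_def by blast
  qed
qed

lemma rec_unique:
  fixes F F' :: "nat \<Rightarrow> nat \<Rightarrow> point3"
  assumes r: "i0 \<le> m" "j0 \<le> n"
    and re: "rec_eq m n i0 j0 G F" and re': "rec_eq m n i0 j0 G F'"
    and l1: "\<forall>i\<le>m. F i j0 = F' i j0" and l2: "\<forall>j\<le>n. F i0 j = F' i0 j"
  shows "\<forall>i\<le>m. \<forall>j\<le>n. F i j = F' i j"
proof -
  have "\<forall>i j. i \<le> m \<longrightarrow> j \<le> n \<longrightarrow> dd i0 i + dd j0 j = k \<longrightarrow> F i j = F' i j" for k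
  proof (induction k rule: less_induct)
    case (less k)
    show ?case
    proof (intro allI impI)
      fix I J assume IJ: "I \<le> m" "J \<le> n" "dd i0 I + dd j0 J = k"
      show "F I J = F' I J"
      proof (cases "I = i0 \<or> J = j0")
        case True then show ?thesis using l1 l2 IJ by auto
      next
        case False
        then have ne: "I \<noteq> i0" "J \<noteq> j0" by auto
        note pi = pv_range[OF IJ(1) ne(1) r(1)] and pj = pv_range[OF IJ(2) ne(2) r(2)]
        have e1: "F (pv i0 I) (pv j0 J) = F' (pv i0 I) (pv j0 J)"
          using less.IH[of "dd i0 (pv i0 I) + dd j0 (pv j0 J)"] pi pj IJ by auto
        have e2: "F I (pv j0 J) = F' I (pv j0 J)"
          using less.IH[of "dd i0 I + dd j0 (pv j0 J)"] pi pj IJ by auto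
        have e3: "F (pv i0 I) J = F' (pv i0 I) J"
          using less.IH[of "dd i0 (pv i0 I) + dd j0 J"] pi pj IJ by auto
        have "F I J = lift {F (pv i0 I) (pv j0 J), F I (pv j0 J), F (pv i0 I) J} (G I J)"
          using re IJ ne unfolding rec_eq_def by blast
        also have "\<dots> = lift {F' (pv i0 I) (pv j0 J), F' I (pv j0 J), F' (pv i0 I) J} (G I J)"
          using e1 e2 e3 by simp
        also have "\<dots> = F' I J"
          using re' IJ ne unfolding rec_eq_def by metis
        finally show ?thesis .
      qed
    qed
  qed
  then show ?thesis by blast
qed



function bld :: "(nat \<Rightarrow> nat \<Rightarrow> point2) \<Rightarrow> (nat \<Rightarrow> point3) \<Rightarrow> (nat \<Rightarrow> point3) \<Rightarrow> nat \<Rightarrow> nat \<Rightarrow> nat \<Rightarrow> nat \<Rightarrow> point3" where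
  "bld G A B i0 j0 i j = (if i = i0 then B j else if j = j0 then A i else
     lift {bld G A B i0 j0 (pv i0 i) (pv j0 j), bld G A B i0 j0 i (pv j0 j), bld G A B i0 j0 (pv i0 i) j} (G i j))"
  by pat_completeness auto
termination
  by (relation "Wellfounded.measure (\<lambda>(G,A,B,i0,j0,i,j). dd i0 i + dd j0 j)") (auto simp: pv_def dd_def)

declare bld.simps[simp del]

lemma bld_i0: "bld G A B i0 j0 i0 j = B j"
  by (subst bld.simps) simp

lemma bld_j0: "i \<noteq> i0 \<Longrightarrow> bld G A B i0 j0 i j0 = A i"
  by (subst bld.simps) simp

lemma bld_off: "i \<noteq> i0 \<Longrightarrow> j \<noteq> j0 \<Longrightarrow> bld G A B i0 j0 i j =
     lift {bld G A B i0 j0 (pv i0 i) (pv j0 j), bld G A B i0 j0 i (pv j0 j), bld G A B i0 j0 (pv i0 i) j} (G i j)"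
  by (subst bld.simps) simp

lemma bld_tops:
  assumes G: "is_net m n G" and r: "i0 \<le> m" "j0 \<le> n"
    and a: "\<forall>i\<le>m. top_view (A i) = G i j0" and b: "\<forall>j\<le>n. top_view (B j) = G i0 j"
  shows "\<forall>i\<le>m. \<forall>j\<le>n. top_view (bld G A B i0 j0 i j) = G i j"
proof -
  have "\<forall>i j. i \<le> m \<longrightarrow> j \<le> n \<longrightarrow> dd i0 i + dd j0 j = k \<longrightarrow> top_view (bld G A B i0 j0 i j) = G i j" for k
  proof (induction k rule: less_induct)
    case (less k)
    show ?case
    proof (intro allI impI)
      fix I J assume IJ: "I \<le> m" "J \<le> n" "dd i0 I + dd j0 J = k"
      show "top_view (bld G A B i0 j0 I J) = G I J"
      proof (cases "I = i0 \<or> J = j0")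
        case True then show ?thesis using a b IJ by (cases "I = i0") (auto simp: bld_i0 bld_j0)
      next
        case False
        then have ne: "I \<noteq> i0" "J \<noteq> j0" by auto
        note pi = pv_range[OF IJ(1) ne(1) r(1)] and pj = pv_range[OF IJ(2) ne(2) r(2)]
        have e1: "top_view (bld G A B i0 j0 (pv i0 I) (pv j0 J)) = G (pv i0 I) (pv j0 J)"
          using less.IH[of "dd i0 (pv i0 I) + dd j0 (pv j0 J)"] pi pj IJ by auto
        have e2: "top_view (bld G A B i0 j0 I (pv j0 J)) = G I (pv j0 J)"
          using less.IH[of "dd i0 I + dd j0 (pv j0 J)"] pi pj IJ by auto
        have e3: "top_view (bld G A B i0 j0 (pv i0 I) J) = G (pv i0 I) J"
          using less.IH[of "dd i0 (pv i0 I) + dd j0 J"] pi pj IJ by auto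
        obtain i where i: "i < m" "far i0 i = I" using far_surj IJ ne r by blast
        obtain j where j: "j < n" "far j0 j = J" using far_surj IJ ne r by blast
        have gq: "convex_quad (G i j) (G (Suc i) j) (G (Suc i) (Suc j)) (G i (Suc j))"
          using G i j by (simp add: is_net_def)
        then have "convex_quad (G (pv i0 I) (pv j0 J)) (G I (pv j0 J)) (G I J) (G (pv i0 I) J)"
          using cq_norm[of G i j i0 j0] i j by simp
        then have nc: "\<not> collinear {G (pv i0 I) (pv j0 J), G I (pv j0 J), G (pv i0 I) J}"
          using cq_nc by blast
        have "bld G A B i0 j0 I J = lift {bld G A B i0 j0 (pv i0 I) (pv j0 J), bld G A B i0 j0 I (pv j0 J),
               bld G A B i0 j0 (pv i0 I) J} (G I J)"
          using ne by (rule bld_off)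
        moreover have "\<not> collinear (top_view ` {bld G A B i0 j0 (pv i0 I) (pv j0 J), bld G A B i0 j0 I (pv j0 J),
               bld G A B i0 j0 (pv i0 I) J})"
          using nc e1 e2 e3 by simp
        ultimately show ?thesis using lift_props[of "bld G A B i0 j0 (pv i0 I) (pv j0 J)" "bld G A B i0 j0 I (pv j0 J)"
               "bld G A B i0 j0 (pv i0 I) J" "G I J"] by simp
      qed
    qed
  qed
  then show ?thesis by blast
qed

lemma bld_rec: "rec_eq m n i0 j0 G (bld G A B i0 j0)"
  unfolding rec_eq_def using bld_off by blast

theorem lemma10:
  fixes m n i0 j0 :: nat
    and G :: "nat \<Rightarrow> nat \<Rightarrow> point2"
    and A B :: "nat \<Rightarrow> point3"
  assumes "is_net m n G"
    and "i0 \<le> m" and "j0 \<le> n"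
    and "A i0 = B j0"
    and "\<forall>i\<le>m. top_view (A i) = G i j0"
    and "\<forall>j\<le>n. top_view (B j) = G i0 j"
  shows "\<exists>F :: nat \<Rightarrow> nat \<Rightarrow> point3.
           is_net m n F \<and> (\<forall>i\<le>m. F i j0 = A i) \<and> (\<forall>j\<le>n. F i0 j = B j)
           \<and> (\<forall>i\<le>m. \<forall>j\<le>n. top_view (F i j) = G i j)
           \<and> (\<forall>F' :: nat \<Rightarrow> nat \<Rightarrow> point3.
                 is_net m n F' \<and> (\<forall>i\<le>m. F' i j0 = A i) \<and> (\<forall>j\<le>n. F' i0 j = B j)
                 \<and> (\<forall>i\<le>m. \<forall>j\<le>n. top_view (F' i j) = G i j)
                 \<longrightarrow> (\<forall>i\<le>m. \<forall>j\<le>n. F' i j = F i j))"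
proof -
  define F where "F = bld G A B i0 j0"
  have tops: "\<forall>i\<le>m. \<forall>j\<le>n. top_view (F i j) = G i j"
    unfolding F_def using bld_tops assms by blast
  have l1: "\<forall>i\<le>m. F i j0 = A i" unfolding F_def using assms(4) by (metis bld_i0 bld_j0)
  have l2: "\<forall>j\<le>n. F i0 j = B j" unfolding F_def by (simp add: bld_i0)
  have re: "rec_eq m n i0 j0 G F" unfolding F_def by (rule bld_rec)
  have net: "is_net m n F" using net_iff_rec[OF assms(1-3) tops] re by simp
  have uq: "\<forall>i\<le>m. \<forall>j\<le>n. F' i j = F i j"
    if h: "is_net m n F' \<and> (\<forall>i\<le>m. F' i j0 = A i) \<and> (\<forall>j\<le>n. F' i0 j = B j)
                 \<and> (\<forall>i\<le>m. \<forall>j\<le>n. top_view (F' i j) = G i j)" for F'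
  proof -
    have re': "rec_eq m n i0 j0 G F'" using net_iff_rec[OF assms(1-3)] h by blast
    show ?thesis
      by (rule rec_unique[OF assms(2,3) re' re]) (use h l1 l2 in auto)
  qed
  show ?thesis using net l1 l2 tops uq by blast
qed


end
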